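(* For Lebesgue almost every $x\in\mathbb{R}$, both the Fréchet superdifferential $\partial^+T(x)$ and the Fréchet subdifferential $\partial T(x)$ of the Takagi function are empty.
   Context: $T(x)=\sum_{n=0}^\infty 2^{-n}\operatorname{dist}(2^nx,\mathbb{Z})$. Fréchet superdifferential: $\partial^+f(x)=\{\xi: \limsup_{h\to0}\frac{f(x+h)-f(x)-\xi h}{|h|}\le0\}$; Fréchet subdifferential: $\partial f(x)=\{\xi: \liminf_{h\to0}\frac{f(x+h)-f(x)-\xi h}{|h|}\ge0\}$. *)

theory Defs
  imports "HOL-Analysis.Analysis"
begin

definition takagi :: "real \<Rightarrow> real" where
  "takagi x = (\<Sum>n. (1/2)^n * infdist ((2::real)^n * x) \<int>)"

definition frechet_superdiff :: "(real \<Rightarrow> real) \<Rightarrow> real \<Rightarrow> real set" where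
  "frechet_superdiff f x = {\<xi>. Limsup (at (0::real))
      (\<lambda>h. ereal ((f (x + h) - f x - \<xi> * h) / \<bar>h\<bar>)) \<le> 0}"

definition frechet_subdiff :: "(real \<Rightarrow> real) \<Rightarrow> real \<Rightarrow> real set" where
  "frechet_subdiff f x = {\<xi>. Liminf (at (0::real))
      (\<lambda>h. ereal ((f (x + h) - f x - \<xi> * h) / \<bar>h\<bar>)) \<ge> 0}"

end

theory Submission
  imports Defs
begin

lemma idist_char:
  fixes w d :: real
  assumes "\<And>m. m \<in> \<int> \<Longrightarrow> d \<le> \<bar>w - m\<bar>" "m0 \<in> \<int>" "\<bar>w - m0\<bar> = d"
  shows "infdist w \<int> = d"
proof (rule antisym)
  show "infdist w \<int> \<le> d" using infdist_le[OF assms(2), of w] assms(3) by (simp add: dist_real_def)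
  have ne: "(\<int>::real set) \<noteq> {}" using assms(2) by auto
  show "d \<le> infdist w \<int>" unfolding infdist_notempty[OF ne]
    by (rule cINF_greatest[OF ne]) (use assms(1) in \<open>auto simp: dist_real_def\<close>)
qed

lemma idist_frac: "infdist (w::real) \<int> = min (frac w) (1 - frac w)"
proof (rule idist_char)
  fix m :: real assume "m \<in> \<int>"
  then obtain k where k: "m = of_int k" by (auto elim: Ints_cases)
  show "min (frac w) (1 - frac w) \<le> \<bar>w - m\<bar>"
  proof (cases "k \<le> \<lfloor>w\<rfloor>")
    case True then have "real_of_int k \<le> of_int \<lfloor>w\<rfloor>" by linarith
    then show ?thesis using k by (simp add: frac_def)
  next
    case False then have "real_of_int k \<ge> of_int \<lfloor>w\<rfloor> + 1" by linarith
    then show ?thesis using k by (simp add: frac_def)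
  qed
next
  show "(if frac w \<le> 1 - frac w then of_int \<lfloor>w\<rfloor> else of_int \<lfloor>w\<rfloor> + 1) \<in> \<int>" by auto
  show "\<bar>w - (if frac w \<le> 1 - frac w then of_int \<lfloor>w\<rfloor> else of_int \<lfloor>w\<rfloor> + 1)\<bar> = min (frac w) (1 - frac w)"
    using frac_lt_1[of w] frac_ge_0[of w] by (auto simp: frac_def)
qed

lemma idist_periodic: "infdist ((w::real) + of_int k) \<int> = infdist w \<int>"
  by (simp add: idist_frac)

lemma idist_le: "infdist (w::real) \<int> \<le> 1/2"
  by (simp add: idist_frac min_def)

lemma idist_lin1:
  fixes w :: real and i :: int
  assumes "of_int i \<le> w" "w \<le> of_int i + 1/2"
  shows "infdist w \<int> = w - of_int i"
proof (rule idist_char[of _ _ "of_int i"])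
  fix m :: real assume "m \<in> \<int>"
  then obtain k where k: "m = of_int k" by (auto elim: Ints_cases)
  show "w - of_int i \<le> \<bar>w - m\<bar>"
  proof (cases "k \<le> i")
    case True then have "real_of_int k \<le> of_int i" by linarith
    then show ?thesis using k assms by simp
  next
    case False then have "real_of_int k \<ge> of_int i + 1" by linarith
    then show ?thesis using k assms by simp
  qed
qed (use assms in auto)

lemma idist_lin2:
  fixes w :: real and i :: int
  assumes "of_int i + 1/2 \<le> w" "w \<le> of_int i + 1"
  shows "infdist w \<int> = of_int i + 1 - w"
proof (rule idist_char[of _ _ "of_int i + 1"])
  fix m :: real assume "m \<in> \<int>"
  then obtain k where k: "m = of_int k" by (auto elim: Ints_cases)
  show "of_int i + 1 - w \<le> \<bar>w - m\<bar>"
  proof (cases "k \<le> i")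
    case True then have "real_of_int k \<le> of_int i" by linarith
    then show ?thesis using k assms by simp
  next
    case False then have "real_of_int k \<ge> of_int i + 1" by linarith
    then show ?thesis using k assms by simp
  qed
qed (use assms in auto)

lemma takagi_summable: "summable (\<lambda>n. (1/2::real)^n * infdist ((2::real)^n * x) \<int>)"
proof (rule summable_comparison_test[of _ "\<lambda>n. (1/2::real)^n"])
  show "\<exists>N. \<forall>n\<ge>N. norm ((1/2::real)^n * infdist ((2::real)^n * x) \<int>) \<le> (1/2)^n"
  proof (intro exI allI impI)
    fix n :: nat
    have "infdist ((2::real)^n * x) \<int> \<le> 1" using idist_le[of "(2::real)^n * x"] by simp
    then show "norm ((1/2::real)^n * infdist ((2::real)^n * x) \<int>) \<le> (1/2)^n"
      using infdist_nonneg[of "2^n*x" "\<int>"] by (simp add: abs_mult mult_left_le)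
  qed
qed simp

lemma takagi_nonneg: "0 \<le> takagi x"
  unfolding takagi_def by (rule suminf_nonneg[OF takagi_summable]) (simp add: infdist_nonneg)

lemma takagi_le1: "takagi x \<le> 1"
proof -
  have "takagi x \<le> (\<Sum>n. (1/2::real)^n * (1/2))"
    unfolding takagi_def
    by (rule suminf_le) (use idist_le takagi_summable in \<open>auto intro!: mult_left_mono summable_mult2\<close>)
  also have "\<dots> = 1"
  proof -
    have "(\<lambda>n. (1/2::real)^n) sums 2" using geometric_sums[of "1/2::real"] by simp
    from sums_mult2[OF this, of "1/2"] show ?thesis by (simp add: sums_unique[symmetric])
  qed
  finally show ?thesis .
qed

lemma takagi_feq: "takagi y = infdist y \<int> + takagi (2*y) / 2"
proof -
  have "takagi y = (\<Sum>n. (1/2::real)^(Suc n) * infdist ((2::real)^(Suc n) * y) \<int>) + infdist y \<int>"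
    unfolding takagi_def using suminf_split_head[OF takagi_summable[of y]] by simp
  also have "(\<lambda>n. (1/2::real)^(Suc n) * infdist ((2::real)^(Suc n) * y) \<int>)
      = (\<lambda>n. (1/2) * ((1/2::real)^n * infdist ((2::real)^n * (2*y)) \<int>))"
    by (simp add: mult.assoc mult.commute mult.left_commute)
  also have "(\<Sum>n. (1/2) * ((1/2::real)^n * infdist ((2::real)^n * (2*y)) \<int>)) = (1/2) * takagi (2*y)"
    unfolding takagi_def by (rule suminf_mult[OF takagi_summable])
  finally show ?thesis by simp
qed

lemma takagi_periodic: "takagi (y + of_int k) = takagi y"
proof -
  have "infdist ((2::real)^n * (y + of_int k)) \<int> = infdist ((2::real)^n * y) \<int>" for n
    using idist_periodic[of "(2::real)^n * y" "2^n * k"] by (simp add: distrib_left)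
  then show ?thesis unfolding takagi_def by simp
qed

lemma takagi_int: "takagi (of_int k) = 0"
  using takagi_periodic[of 0 k] by (simp add: takagi_def)

definition aa :: "nat \<Rightarrow> real \<Rightarrow> real" where "aa n x = of_int \<lfloor>2^n*x\<rfloor> / 2^n"
definition sg :: "real \<Rightarrow> real" where "sg x = (if frac x < 1/2 then 1 else -1)"
definition DD :: "nat \<Rightarrow> real \<Rightarrow> real" where "DD n x = (\<Sum>j<n. sg (2^j*x))"

lemma pow2_shift: "(2::real)^Suc n * x = 2^n * (2*x)"
  by (simp add: power_Suc2)

lemma aa_Suc: "aa (Suc n) x = aa n (2*x) / 2"
  unfolding aa_def pow2_shift by (simp add: power_Suc2)

lemma DD_Suc: "DD (Suc n) x = sg x + DD n (2*x)"
  unfolding DD_def sum.lessThan_Suc_shift pow2_shift by simp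

lemma DD_Suc2: "DD (Suc n) x = DD n x + sg (2^n*x)"
  unfolding DD_def by simp

lemma aa_bounds:
  "of_int \<lfloor>u\<rfloor> \<le> aa n u" "aa n u + 1/2^n \<le> of_int \<lfloor>u\<rfloor> + 1"
proof -
  have p: "(0::real) < 2^n" by simp
  have "real_of_int ((2::int)^n * \<lfloor>u\<rfloor>) \<le> 2^n*u"
    by (simp add: mult_left_mono)
  then have "(2::int)^n * \<lfloor>u\<rfloor> \<le> \<lfloor>2^n*u\<rfloor>"
    by (rule le_floor_iff[THEN iffD2])
  then have "real_of_int ((2::int)^n * \<lfloor>u\<rfloor>) \<le> of_int \<lfloor>2^n*u\<rfloor>" 
    by (simp only: of_int_le_iff)
  then have "of_int \<lfloor>u\<rfloor> * 2^n \<le> real_of_int \<lfloor>2^n*u\<rfloor>" by (simp add: mult.commute)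
  then show "of_int \<lfloor>u\<rfloor> \<le> aa n u" unfolding aa_def by (simp only: pos_le_divide_eq[OF p])
  have "real_of_int \<lfloor>2^n*u\<rfloor> \<le> 2^n*u" by (rule of_int_floor_le)
  also have "\<dots> < 2^n * (of_int \<lfloor>u\<rfloor> + 1)" by (intro mult_strict_left_mono) auto
  also have "\<dots> = real_of_int ((2::int)^n * (\<lfloor>u\<rfloor> + 1))" by simp
  finally have "\<lfloor>2^n*u\<rfloor> < (2::int)^n * (\<lfloor>u\<rfloor> + 1)"
    by (simp only: of_int_less_iff)
  then have "\<lfloor>2^n*u\<rfloor> + 1 \<le> (2::int)^n * (\<lfloor>u\<rfloor> + 1)" by linarith
  then have "real_of_int (\<lfloor>2^n*u\<rfloor> + 1) \<le> of_int ((2::int)^n * (\<lfloor>u\<rfloor> + 1))"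
    by (simp only: of_int_le_iff)
  then have "real_of_int \<lfloor>2^n*u\<rfloor> + 1 \<le> (of_int \<lfloor>u\<rfloor> + 1) * 2^n" by (simp add: mult.commute)
  then have "(real_of_int \<lfloor>2^n*u\<rfloor> + 1) / 2^n \<le> of_int \<lfloor>u\<rfloor> + 1"
    by (simp only: pos_divide_le_eq[OF p])
  then show "aa n u + 1/2^n \<le> of_int \<lfloor>u\<rfloor> + 1" unfolding aa_def by (simp add: add_divide_distrib)
qed

lemma lin_piece:
  fixes x w1 w2 :: real
  assumes "of_int \<lfloor>2*x\<rfloor> / 2 \<le> w1" "w1 \<le> w2" "w2 \<le> (of_int \<lfloor>2*x\<rfloor> + 1)/2"
  shows "infdist w2 \<int> - infdist w1 \<int> = sg x * (w2 - w1)"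
proof (cases "even \<lfloor>2*x\<rfloor>")
  case True
  then obtain i where i: "\<lfloor>2*x\<rfloor> = 2*i" by auto
  have "of_int i \<le> x" "x < of_int i + 1/2" using i floor_le_iff[of "2*x"] by linarith+
  then have "\<lfloor>x\<rfloor> = i" by linarith
  then have "sg x = 1" using \<open>x < of_int i + 1/2\<close> by (simp add: sg_def frac_def)
  moreover have "infdist w1 \<int> = w1 - of_int i" "infdist w2 \<int> = w2 - of_int i"
    using assms i by (auto intro!: idist_lin1)
  ultimately show ?thesis by simp
next
  case False
  then obtain i where i: "\<lfloor>2*x\<rfloor> = 2*i + 1" by (metis oddE)
  have "of_int i + 1/2 \<le> x" "x < of_int i + 1" using i floor_le_iff[of "2*x"] by linarith+
  then have "\<lfloor>x\<rfloor> = i" by linarith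
  then have "sg x = -1" using \<open>of_int i + 1/2 \<le> x\<close> by (simp add: sg_def frac_def)
  moreover have "infdist w1 \<int> = of_int i + 1 - w1" "infdist w2 \<int> = of_int i + 1 - w2"
    using assms i by (auto intro!: idist_lin2)
  ultimately show ?thesis by simp
qed

lemma key:
  assumes "0 \<le> s" "s \<le> 1"
  shows "takagi (aa n x + s/2^n) = takagi (aa n x) + DD n x * s / 2^n + takagi s / 2^n"
  using assms
proof (induction n arbitrary: x)
  case 0
  have "takagi (of_int \<lfloor>x\<rfloor> + s) = takagi s"
    using takagi_periodic[of s "\<lfloor>x\<rfloor>"] by (simp add: add.commute)
  then show ?case by (simp add: aa_def DD_def takagi_int)
next
  case (Suc n)
  define b where "b = aa n (2*x)"
  define z where "z = b + s/2^n"
  have e1: "aa (Suc n) x + s/2^Suc n = z/2" unfolding z_def b_def aa_Suc by (simp add: field_simps)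
  have e2: "aa (Suc n) x = b/2" unfolding b_def aa_Suc by simp
  have t1: "takagi (z/2) = infdist (z/2) \<int> + takagi z / 2" using takagi_feq[of "z/2"] by simp
  have t2: "takagi (b/2) = infdist (b/2) \<int> + takagi b / 2" using takagi_feq[of "b/2"] by simp
  have ih: "takagi z = takagi b + DD n (2*x) * s / 2^n + takagi s / 2^n"
    using Suc.IH[of "2*x"] Suc.prems unfolding z_def b_def by simp
  have b1: "of_int \<lfloor>2*x\<rfloor> \<le> b" "b + 1/2^n \<le> of_int \<lfloor>2*x\<rfloor> + 1"
    unfolding b_def by (rule aa_bounds)+
  have "s/2^n \<le> 1/2^n" using Suc.prems by (simp add: divide_right_mono)
  moreover have "0 \<le> s/2^n" using Suc.prems by simp
  ultimately have zz: "z \<le> b + 1/2^n" "b \<le> z" unfolding z_def by linarith+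
  have "infdist (z/2) \<int> - infdist (b/2) \<int> = sg x * (z/2 - b/2)"
  proof (rule lin_piece)
    have "z \<le> of_int \<lfloor>2*x\<rfloor> + 1" using zz b1 by linarith
    then show "z/2 \<le> (of_int \<lfloor>2*x\<rfloor> + 1)/2" by (simp add: divide_right_mono)
  qed (use b1 zz in linarith)+
  moreover have "sg x * (z/2 - b/2) = sg x * s / 2^Suc n"
    by (simp add: z_def field_simps)
  ultimately have l: "infdist (z/2) \<int> - infdist (b/2) \<int> = sg x * s / 2^Suc n"
    by simp
  have "takagi (aa (Suc n) x + s/2^Suc n) = infdist (z/2) \<int> + takagi z / 2" unfolding e1 by (rule t1)
  also have "\<dots> = infdist (b/2) \<int> + sg x * s / 2^Suc n + takagi z / 2" using l by simp
  also have "\<dots> = takagi (b/2) + (sg x + DD n (2*x)) * s / 2^Suc n + takagi s / 2^Suc n"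
    unfolding t2 ih by (simp add: field_simps)
  finally show ?case unfolding e2 DD_Suc .
qed

definition tt :: "nat \<Rightarrow> real \<Rightarrow> real" where "tt n x = frac (2^n*x)"

lemma x_decomp: "x = aa n x + tt n x / 2^n"
proof -
  have "2^n*x = of_int \<lfloor>2^n*x\<rfloor> + frac (2^n*x)" by (simp add: frac_def)
  then show ?thesis unfolding aa_def tt_def by (simp add: field_simps)
qed

lemma tt_bounds: "0 \<le> tt n x" "tt n x < 1"
  unfolding tt_def by (simp_all add: frac_lt_1)

definition GG :: "real \<Rightarrow> real \<Rightarrow> nat \<Rightarrow> real \<Rightarrow> real" where
  "GG x \<xi> n s = (DD n x - \<xi>) * (s - tt n x) + takagi s - takagi (tt n x)"

lemma gform:
  assumes "0 \<le> s" "s \<le> 1"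
  shows "2^n * (takagi (aa n x + s/2^n) - takagi x - \<xi> * (aa n x + s/2^n - x)) = GG x \<xi> n s"
proof -
  have tx: "takagi x = takagi (aa n x) + DD n x * tt n x / 2^n + takagi (tt n x) / 2^n"
    using key[of "tt n x" n x] tt_bounds[of n x] x_decomp[of x n] by simp
  have xx: "aa n x + s/2^n - x = (s - tt n x)/2^n"
    using x_decomp[of x n] by (simp add: field_simps)
  show ?thesis unfolding key[OF assms] tx xx GG_def by (simp add: field_simps)
qed

lemma small_h:
  fixes d :: real
  assumes "\<forall>h. h \<noteq> 0 \<and> \<bar>h\<bar> < d \<longrightarrow> P h"
  and "d > 0"
  shows "\<exists>N. \<forall>n\<ge>N. \<forall>h. \<bar>h\<bar> \<le> 1/2^n \<longrightarrow> h \<noteq> 0 \<longrightarrow> P h"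
proof -
  obtain N where N: "(1/2::real)^N < d" using real_arch_pow_inv[OF assms(2), of "1/2"] by auto
  show ?thesis
  proof (intro exI allI impI)
    fix n h assume "N \<le> n" "\<bar>h::real\<bar> \<le> 1/2^n" "h \<noteq> 0"
    have "(1/2::real)^n \<le> (1/2)^N" using \<open>N \<le> n\<close> by (intro power_decreasing) auto
    then have "\<bar>h\<bar> < d" using \<open>\<bar>h\<bar> \<le> 1/2^n\<close> N by (simp add: power_one_over)
    then show "P h" using assms(1) \<open>h \<noteq> 0\<close> by blast
  qed
qed

lemma super_bound:
  assumes "\<xi> \<in> frechet_superdiff takagi x"
  shows "\<exists>N. \<forall>n\<ge>N. \<forall>s. 0 \<le> s \<longrightarrow> s \<le> 1 \<longrightarrow> GG x \<xi> n s \<le> 1/2"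
proof -
  let ?q = "\<lambda>h. (takagi (x + h) - takagi x - \<xi> * h) / \<bar>h\<bar>"
  have "Limsup (at 0) (\<lambda>h. ereal (?q h)) < ereal (1/2)"
    using assms unfolding frechet_superdiff_def by (auto intro: le_less_trans)
  from Limsup_lessD[OF this] have "eventually (\<lambda>h. ?q h < 1/2) (at (0::real))" by simp
  then obtain d where d: "d > 0" "\<forall>h. h \<noteq> 0 \<and> \<bar>h\<bar> < d \<longrightarrow> ?q h < 1/2"
    unfolding eventually_at by (auto simp: dist_real_def)
  obtain N where N: "\<forall>n\<ge>N. \<forall>h. \<bar>h\<bar> \<le> 1/2^n \<longrightarrow> h \<noteq> 0 \<longrightarrow> ?q h < 1/2"
    using small_h[OF d(2) d(1)] by blast
  show ?thesis
  proof (intro exI allI impI)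
    fix n :: nat and s :: real assume n: "N \<le> n" and s: "0 \<le> s" "s \<le> 1"
    define h where "h = aa n x + s/2^n - x"
    have hh: "h = (s - tt n x)/2^n" using x_decomp[of x n] by (simp add: h_def field_simps)
    have "\<bar>s - tt n x\<bar> \<le> 1" using s tt_bounds[of n x] by linarith
    then have habs: "\<bar>h\<bar> \<le> 1/2^n" unfolding hh by (simp add: divide_right_mono)
    have "takagi (x + h) - takagi x - \<xi> * h \<le> 1/2 * (1/2^n)"
    proof (cases "h = 0")
      case True then show ?thesis by simp
    next
      case False
      then have "?q h < 1/2" using N n habs by blast
      then have "takagi (x + h) - takagi x - \<xi> * h < 1/2 * \<bar>h\<bar>"
        using False by (simp add: divide_less_eq)
      also have "\<dots> \<le> 1/2 * (1/2^n)" using habs by simp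
      finally show ?thesis by simp
    qed
    then have "2^n * (takagi (x + h) - takagi x - \<xi> * h) \<le> 1/2"
      by (simp add: field_simps)
    moreover have "x + h = aa n x + s/2^n" by (simp add: h_def)
    ultimately show "GG x \<xi> n s \<le> 1/2" using gform[OF s, of n x \<xi>] by (simp add: h_def)
  qed
qed

lemma sub_bound:
  assumes "\<xi> \<in> frechet_subdiff takagi x"
  shows "\<exists>N. \<forall>n\<ge>N. \<forall>s. 0 \<le> s \<longrightarrow> s \<le> 1 \<longrightarrow> GG x \<xi> n s \<ge> -1/2"
proof -
  let ?q = "\<lambda>h. (takagi (x + h) - takagi x - \<xi> * h) / \<bar>h\<bar>"
  have "ereal (-1/2) < Liminf (at 0) (\<lambda>h. ereal (?q h))"
  proof -
    have "ereal (-1/2) < 0" by simp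
    moreover have "0 \<le> Liminf (at 0) (\<lambda>h. ereal (?q h))" using assms unfolding frechet_subdiff_def by simp
    ultimately show ?thesis by (rule less_le_trans)
  qed
  from less_LiminfD[OF this] have "eventually (\<lambda>h. ?q h > -1/2) (at (0::real))" by simp
  then obtain d where d: "d > 0" "\<forall>h. h \<noteq> 0 \<and> \<bar>h\<bar> < d \<longrightarrow> ?q h > -1/2"
    unfolding eventually_at by (auto simp: dist_real_def)
  obtain N where N: "\<forall>n\<ge>N. \<forall>h. \<bar>h\<bar> \<le> 1/2^n \<longrightarrow> h \<noteq> 0 \<longrightarrow> ?q h > -1/2"
    using small_h[OF d(2) d(1)] by blast
  show ?thesis
  proof (intro exI allI impI)
    fix n :: nat and s :: real assume n: "N \<le> n" and s: "0 \<le> s" "s \<le> 1"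
    define h where "h = aa n x + s/2^n - x"
    have hh: "h = (s - tt n x)/2^n" using x_decomp[of x n] by (simp add: h_def field_simps)
    have "\<bar>s - tt n x\<bar> \<le> 1" using s tt_bounds[of n x] by linarith
    then have habs: "\<bar>h\<bar> \<le> 1/2^n" unfolding hh by (simp add: divide_right_mono)
    have "takagi (x + h) - takagi x - \<xi> * h \<ge> -1/2 * (1/2^n)"
    proof (cases "h = 0")
      case True then show ?thesis by simp
    next
      case False
      then have "?q h > -1/2" using N n habs by blast
      then have "takagi (x + h) - takagi x - \<xi> * h > -1/2 * \<bar>h\<bar>"
        using False by (simp add: less_divide_eq)
      moreover have "-1/2 * \<bar>h\<bar> \<ge> -1/2 * (1/2^n)" using habs by simp
      ultimately show ?thesis by simp
    qed
    then have "2^n * (takagi (x + h) - takagi x - \<xi> * h) \<ge> -1/2"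
      by (simp add: field_simps)
    moreover have "x + h = aa n x + s/2^n" by (simp add: h_def)
    ultimately show "GG x \<xi> n s \<ge> -1/2" using gform[OF s, of n x \<xi>] by (simp add: h_def)
  qed
qed

definition goodx :: "real \<Rightarrow> bool" where
  "goodx x \<longleftrightarrow> (\<forall>L N. (\<exists>k\<ge>N. \<forall>i<L. tt (k+i) x < 1/2) \<and> (\<exists>k\<ge>N. \<forall>i<L. tt (k+i) x \<ge> 1/2))"

lemma DD_step: "DD n x - \<xi> + (if tt n x < 1/2 then 1 else -1) = DD (Suc n) x - \<xi>"
  by (simp add: DD_Suc2 sg_def tt_def)

lemma takagi_0: "takagi 0 = 0" using takagi_int[of 0] by simp
lemma takagi_1: "takagi 1 = 0" using takagi_int[of 1] by simp

lemma GG_1: "GG x \<xi> n 1 = (DD n x - \<xi>) * (1 - tt n x) - takagi (tt n x)"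
  by (simp add: GG_def takagi_1)
lemma GG_0: "GG x \<xi> n 0 = - ((DD n x - \<xi>) * tt n x) - takagi (tt n x)"
  by (simp add: GG_def takagi_0)

lemma lin_help1: "4*a \<le> (P::real) \<Longrightarrow> T \<le> 1 \<Longrightarrow> P - T \<le> 1/2 \<Longrightarrow> 1/2 < a \<Longrightarrow> False"
  by linarith
lemma lin_help2: "4*a \<le> (P::real) \<Longrightarrow> T \<le> 1 \<Longrightarrow> P - T \<le> 1/2 \<Longrightarrow> 1/2 \<le> a \<Longrightarrow> False"
  by linarith

lemma super_empty:
  assumes g: "goodx x"
  shows "frechet_superdiff takagi x = {}"
proof (rule ccontr)
  assume "frechet_superdiff takagi x \<noteq> {}"
  then obtain \<xi> where "\<xi> \<in> frechet_superdiff takagi x" by auto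
  from super_bound[OF this] obtain N where N:
    "\<forall>n\<ge>N. \<forall>s. 0 \<le> s \<longrightarrow> s \<le> 1 \<longrightarrow> GG x \<xi> n s \<le> 1/2" by blast
  define c where "c n = DD n x - \<xi>" for n
  have cstep: "c (Suc n) = c n + (if tt n x < 1/2 then 1 else -1)" for n
    using DD_step[of n x \<xi>] by (simp add: c_def)
  have A: "tt n x \<ge> 1/2" if "n \<ge> N" "c n \<ge> 4" for n
  proof (rule ccontr)
    assume "\<not> tt n x \<ge> 1/2"
    then have t: "1 - tt n x > 1/2" by simp
    have "c n * (1 - tt n x) \<ge> 4 * (1 - tt n x)" using that t by (intro mult_right_mono) auto
    moreover have "takagi (tt n x) \<le> 1" by (rule takagi_le1)
    moreover have "c n * (1 - tt n x) - takagi (tt n x) \<le> 1/2" using N that unfolding c_def GG_1[symmetric] by auto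
    ultimately show False using t by (rule lin_help1)
  qed
  have B: "tt n x < 1/2" if "n \<ge> N" "c n \<le> -4" for n
  proof (rule ccontr)
    assume "\<not> tt n x < 1/2"
    then have t: "tt n x \<ge> 1/2" by simp
    have "(- c n) * tt n x \<ge> 4 * tt n x" using that t by (intro mult_right_mono) auto
    then have "4 * tt n x \<le> - (c n * tt n x)" by simp
    moreover have "takagi (tt n x) \<le> 1" by (rule takagi_le1)
    moreover have "- (c n * tt n x) - takagi (tt n x) \<le> 1/2" using N that unfolding c_def GG_0[symmetric] by auto
    ultimately show False using t by (intro lin_help2[of "tt n x" "-(c n * tt n x)" "takagi (tt n x)"])
  qed
  define B where "B = max \<bar>c N\<bar> 5"
  have bnd: "\<bar>c n\<bar> \<le> B" if "n \<ge> N" for n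
    using that
  proof (induction n rule: dec_induct)
    case base then show ?case by (simp add: B_def)
  next
    case (step m)
    show ?case
    proof (cases "c m \<ge> 4")
      case True
      then have "c (Suc m) = c m - 1" using A[OF step(1)] by (simp add: cstep)
      then show ?thesis using step True by (simp add: B_def)
    next
      case False
      show ?thesis
      proof (cases "c m \<le> -4")
        case True
        then have "c (Suc m) = c m + 1" using B[OF step(1)] by (simp add: cstep)
        then show ?thesis using step True by (simp add: B_def)
      next
        case F2: False
        have "\<bar>c (Suc m) - c m\<bar> \<le> 1" by (simp add: cstep)
        then show ?thesis using False F2 by (simp add: B_def)
      qed
    qed
  qed
  define L where "L = nat \<lceil>2*B\<rceil> + 1"
  from g obtain k where k: "k \<ge> N" "\<forall>i<L. tt (k+i) x < 1/2" unfolding goodx_def by blast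
  have run: "c (k+i) = c k + i" if "i \<le> L" for i
    using that
  proof (induction i)
    case 0 then show ?case by simp
  next
    case (Suc i)
    then have "tt (k+i) x < 1/2" using k by simp
    then show ?case using Suc by (simp add: cstep)
  qed
  have "real L \<le> 2*B" using run[of L] bnd[of k] bnd[of "k+L"] k by simp
  moreover have "real L > 2*B" unfolding L_def by linarith
  ultimately show False by simp
qed

lemma lin_help3: "4*a \<le> (P::real) \<Longrightarrow> 0 \<le> T \<Longrightarrow> - P - T \<ge> -1/2 \<Longrightarrow> 1/2 \<le> a \<Longrightarrow> False"
  by linarith

lemma sub_empty:
  assumes g: "goodx x"
  shows "frechet_subdiff takagi x = {}"
proof (rule ccontr)
  assume "frechet_subdiff takagi x \<noteq> {}"
  then obtain \<xi> where "\<xi> \<in> frechet_subdiff takagi x" by auto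
  from sub_bound[OF this] obtain N where N:
    "\<forall>n\<ge>N. \<forall>s. 0 \<le> s \<longrightarrow> s \<le> 1 \<longrightarrow> GG x \<xi> n s \<ge> -1/2" by blast
  define c where "c n = DD n x - \<xi>" for n
  have cstep: "c (Suc n) = c n + (if tt n x < 1/2 then 1 else -1)" for n
    using DD_step[of n x \<xi>] by (simp add: c_def)
  have C: "tt n x < 1/2" if "n \<ge> N" "c n \<ge> 4" for n
  proof (rule ccontr)
    assume "\<not> tt n x < 1/2"
    then have t: "tt n x \<ge> 1/2" by simp
    have "4 * tt n x \<le> c n * tt n x" using that t by (intro mult_right_mono) auto
    moreover have "0 \<le> takagi (tt n x)" by (rule takagi_nonneg)
    moreover have "GG x \<xi> n 0 \<ge> -1/2" using N that by auto
    then have "- (c n * tt n x) - takagi (tt n x) \<ge> -1/2" unfolding c_def GG_0[symmetric] .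
    ultimately show False using t by (rule lin_help3)
  qed
  have D: "tt n x \<ge> 1/2" if "n \<ge> N" "c n \<le> -4" for n
  proof (rule ccontr)
    assume "\<not> tt n x \<ge> 1/2"
    then have t: "1 - tt n x > 1/2" by simp
    have "(- c n) * (1 - tt n x) \<ge> 4 * (1 - tt n x)" using that t by (intro mult_right_mono) auto
    then have "4 * (1 - tt n x) \<le> - (c n * (1 - tt n x))" by simp
    moreover have "0 \<le> takagi (tt n x)" by (rule takagi_nonneg)
    moreover have "GG x \<xi> n 1 \<ge> -1/2" using N that by auto
    then have "c n * (1 - tt n x) - takagi (tt n x) \<ge> -1/2" unfolding c_def GG_1[symmetric] .
    then have "- (- (c n * (1 - tt n x))) - takagi (tt n x) \<ge> -1/2" by simp
    ultimately show False using t by (intro lin_help3[of "1 - tt n x" "- (c n * (1 - tt n x))" "takagi (tt n x)"]) auto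
  qed
  from g obtain k where k: "k \<ge> N" "\<forall>i<9. tt (k+i) x \<ge> 1/2" unfolding goodx_def by blast
  have ck: "c k < 4"
  proof (rule ccontr)
    assume "\<not> c k < 4"
    then have "tt k x < 1/2" using C[of k] k by simp
    then show False using k(2) by (metis add_0_right not_le zero_less_numeral)
  qed
  have run: "c (k+i) = c k - i" if "i \<le> 9" for i
    using that
  proof (induction i)
    case 0 then show ?case by simp
  next
    case (Suc i)
    then have "tt (k+i) x \<ge> 1/2" using k by simp
    then show ?case using Suc by (simp add: cstep)
  qed
  have neg: "c m \<le> -4" if "m \<ge> k+8" for m
    using that
  proof (induction m rule: dec_induct)
    case base then show ?case using run[of 8] ck by simp
  next
    case (step m)
    then have "tt m x \<ge> 1/2" using D[of m] k by simp
    then show ?case using step by (simp add: cstep)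
  qed
  from g obtain k' where k': "k' \<ge> k+8" "\<forall>i<1. tt (k'+i) x < 1/2" unfolding goodx_def by blast
  then have "tt k' x < 1/2" by simp
  moreover have "tt k' x \<ge> 1/2" using D[of k'] neg[of k'] k k' by simp
  ultimately show False by simp
qed

lemma affine_image_eq:
  fixes c d :: real assumes "c \<noteq> 0"
  shows "(\<lambda>y. c * y + d) ` A = (\<lambda>x. (x - d)/c) -` A"
proof
  show "(\<lambda>y. c * y + d) ` A \<subseteq> (\<lambda>x. (x - d)/c) -` A" using assms by auto
  show "(\<lambda>x. (x - d)/c) -` A \<subseteq> (\<lambda>y. c * y + d) ` A"
  proof
    fix x assume "x \<in> (\<lambda>x. (x - d)/c) -` A"
    then have "(x-d)/c \<in> A" by simp
    moreover have "x = c * ((x-d)/c) + d" using assms by simp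
    ultimately show "x \<in> (\<lambda>y. c * y + d) ` A" by blast
  qed
qed

lemma affine_image_sets:
  fixes c d :: real assumes "c \<noteq> 0" "A \<in> sets borel"
  shows "(\<lambda>y. c * y + d) ` A \<in> sets lebesgue"
proof -
  have m: "(\<lambda>x::real. (x - d)/c) \<in> borel_measurable borel" by measurable
  have "(\<lambda>x. (x - d)/c) -` A \<inter> space borel \<in> sets borel" by (rule measurable_sets[OF m assms(2)])
  then show ?thesis unfolding affine_image_eq[OF assms(1)] by simp
qed

lemma affine_image_measure:
  fixes c d :: real assumes "c > 0"
  shows "emeasure lebesgue ((\<lambda>y. c * y + d) ` A) = ennreal c * emeasure lebesgue A"
  using emeasure_lebesgue_affine[of c d A] assms by simp

lemma nullG:
  fixes B :: "real set" and L m0 :: nat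
  assumes Bm: "B \<in> sets borel"
  and Bf: "\<And>x. x \<in> B \<Longrightarrow> frac (2^L*x) \<in> B"
  and Bm0: "\<And>x. x \<in> B \<Longrightarrow> \<lfloor>2^L*x\<rfloor> mod 2^L \<noteq> int m0"
  and m0: "m0 < 2^L"
  shows "B \<in> null_sets lebesgue"
proof -
  define A where "A = B \<inter> {0..<1}"
  have Am: "A \<in> sets borel" unfolding A_def using Bm by simp
  define f where "f z m y = (1/2^L) * y + (of_int z + real m / 2^L)" for z :: int and m :: nat and y :: real
  define I where "I = {..<(2::nat)^L} - {m0}"
  have fI: "finite I" by (simp add: I_def)
  have cardI: "card I = 2^L - 1" unfolding I_def using m0 by (simp add: card_Diff_singleton)
  have fm: "f z m ` A \<in> sets lebesgue" for z m
    unfolding f_def[abs_def] by (rule affine_image_sets) (use Am in auto)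
  have fmeas: "emeasure lebesgue (f z m ` A) = ennreal (1/2^L) * emeasure lebesgue A" for z m
    unfolding f_def[abs_def] by (rule affine_image_measure) simp
  have cover: "B \<inter> {of_int z..<of_int z+1} \<subseteq> (\<Union>m\<in>I. f z m ` A)" for z
  proof
    fix x assume x: "x \<in> B \<inter> {of_int z..<of_int z+1}"
    define q where "q = \<lfloor>2^L*x\<rfloor> - 2^L * z"
    have p: "(0::real) < 2^L" by simp
    have "real_of_int (2^L * z) \<le> 2^L*x" using x p by simp
    then have q0: "0 \<le> q" unfolding q_def using le_floor_iff by (metis diff_ge_0_iff_ge)
    have "2^L*x < 2^L * (of_int z + 1)" using x p by (intro mult_strict_left_mono) auto
    then have "2^L*x < real_of_int (2^L * z + 2^L)" by (simp add: distrib_left)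
    then have "\<lfloor>2^L*x\<rfloor> < 2^L * z + 2^L" by (simp add: floor_less_iff)
    then have q1: "q < 2^L" unfolding q_def by simp
    have "\<lfloor>2^L*x\<rfloor> = q + 2^L * z" unfolding q_def by simp
    then have "\<lfloor>2^L*x\<rfloor> mod 2^L = q" using q0 q1 by simp
    then have qm0: "q \<noteq> int m0" using Bm0 x by auto
    define m where "m = nat q"
    have mI: "m \<in> I" unfolding I_def m_def using q0 q1 qm0 by (auto simp: nat_less_iff)
    define y where "y = frac (2^L*x)"
    have yA: "y \<in> A" unfolding A_def y_def using Bf x by (auto simp: frac_lt_1)
    have "real m = of_int q" unfolding m_def using q0 by simp
    then have "f z m y = x" unfolding f_def y_def frac_def q_def by (simp add: field_simps)
    then show "x \<in> (\<Union>m\<in>I. f z m ` A)" using mI yA by blast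
  qed
  define c where "c = ennreal (real (2^L - 1) / 2^L)"
  have bound: "emeasure lebesgue (B \<inter> {of_int z..<of_int z+1}) \<le> c * emeasure lebesgue A" for z
  proof -
    have "emeasure lebesgue (B \<inter> {of_int z..<of_int z+1}) \<le> emeasure lebesgue (\<Union>m\<in>I. f z m ` A)"
      by (rule emeasure_mono[OF cover]) (use fI fm in auto)
    also have "\<dots> \<le> (\<Sum>m\<in>I. emeasure lebesgue (f z m ` A))"
      by (rule emeasure_subadditive_finite) (use fI fm in auto)
    also have "\<dots> = of_nat (card I) * (ennreal (1/2^L) * emeasure lebesgue A)" by (simp add: fmeas)
    also have "\<dots> = c * emeasure lebesgue A"
      unfolding c_def cardI mult.assoc[symmetric]
      by (simp add: ennreal_of_nat_eq_real_of_nat ennreal_mult'[symmetric] divide_inverse)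
    finally show ?thesis .
  qed
  have Asub: "A \<subseteq> {0..<1}" unfolding A_def by auto
  have I01: "{0..<(1::real)} \<in> sets lborel" by simp
  have "emeasure lebesgue A \<le> emeasure lebesgue {0..<(1::real)}"
    by (rule emeasure_mono[OF Asub]) (rule sets_completionI_sets[OF I01])
  also have "emeasure lebesgue {0..<(1::real)} = emeasure lborel {0..<(1::real)}"
    using emeasure_completion[OF sets_completionI_sets[OF I01]] main_part[OF I01] by simp
  also have "\<dots> = 1" by simp
  finally have "emeasure lebesgue A \<le> 1" .
  then have Afin: "emeasure lebesgue A < \<infinity>" unfolding infinity_ennreal_def by (rule order.strict_trans1[OF _ ennreal_one_less_top])
  then have Afin': "emeasure lebesgue A \<noteq> top" unfolding infinity_ennreal_def by simp
  define r where "r = measure lebesgue A"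
  have Ar: "emeasure lebesgue A = ennreal r"
    unfolding r_def by (rule emeasure_eq_ennreal_measure[OF Afin'])
  have r0: "0 \<le> r" unfolding r_def by simp
  have B0: "B \<inter> {real_of_int 0..<real_of_int 0+1} = A" unfolding A_def by simp
  have "ennreal r \<le> c * ennreal r"
    using bound[of 0] unfolding B0 Ar .
  also have "c * ennreal r = ennreal (real (2^L - 1) / 2^L * r)"
    unfolding c_def by (subst ennreal_mult) (simp_all add: r0)
  finally have "r \<le> real (2^L - 1) / 2^L * r"
    by (subst (asm) ennreal_le_iff) (use r0 in simp)+
  moreover have "real (2^L - 1) / 2^L < (1::real)" by (simp add: of_nat_diff)
  ultimately have "r = 0" using r0 by (smt (verit) mult_less_cancel_right2)
  then have A0: "emeasure lebesgue A = 0" using Ar by simp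
  have "B \<inter> {of_int z..<of_int z+1} \<in> null_sets lebesgue" for z
  proof (rule null_setsI)
    show "emeasure lebesgue (B \<inter> {of_int z..<of_int z+1}) = 0" using bound[of z] A0 by simp
    show "B \<inter> {of_int z..<of_int z+1} \<in> sets lebesgue" using Bm by simp
  qed
  then have "(\<Union>z::int. B \<inter> {of_int z..<of_int z+1}) \<in> null_sets lebesgue" by blast
  moreover have "(\<Union>z::int. B \<inter> {of_int z..<of_int z+1}) = B"
  proof (intro antisym subsetI)
    fix x assume "x \<in> B"
    then show "x \<in> (\<Union>z::int. B \<inter> {of_int z..<of_int z+1})"
      by (intro UN_I[of "\<lfloor>x\<rfloor>"]) auto
  qed auto
  ultimately show ?thesis by simp
qed

definition Bad :: "(real \<Rightarrow> bool) \<Rightarrow> nat \<Rightarrow> real set" where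
  "Bad P L = {x. \<forall>k. \<exists>i<L. \<not> P (tt (k+i) x)}"

lemma tt_frac: "tt j (frac (2^L*x)) = tt (j+L) x"
proof -
  have "2^j * frac (2^L*x) = 2^(j+L)*x + of_int (- (2^j * \<lfloor>2^L*x\<rfloor>))"
    by (simp add: frac_def power_add algebra_simps)
  then show ?thesis unfolding tt_def by (simp only: frac_add_of_int_right)
qed

lemma Bad_frac: "x \<in> Bad P L \<Longrightarrow> frac (2^L*x) \<in> Bad P L"
  unfolding Bad_def
proof (safe)
  fix k assume "\<forall>k. \<exists>i<L. \<not> P (tt (k+i) x)"
  then obtain i where "i < L" "\<not> P (tt (k+L+i) x)" by blast
  then show "\<exists>i<L. \<not> P (tt (k+i) (frac (2^L*x)))"
    by (intro exI[of _ i]) (simp add: tt_frac add.commute add.left_commute)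
qed

lemma tt_block:
  assumes "\<lfloor>2^L*x\<rfloor> mod 2^L = int m0" "i \<le> L"
  shows "tt i x = frac ((real m0 + frac (2^L*x)) / 2^(L-i) + of_int (2^i * (\<lfloor>2^L*x\<rfloor> div 2^L)))"
proof -
  define q where "q = \<lfloor>2^L*x\<rfloor> div 2^L"
  have fl: "\<lfloor>2^L*x\<rfloor> = 2^L * q + int m0" unfolding q_def using assms(1)
    by (metis mult_div_mod_eq)
  have pw: "(2::real)^L = 2^i * 2^(L-i)" using assms(2) by (simp add: power_add[symmetric])
  have "2^L*x = of_int \<lfloor>2^L*x\<rfloor> + frac (2^L*x)" by (simp add: frac_def)
  then have "2^L*x = 2^L * of_int q + real m0 + frac (2^L*x)" using fl by simp
  then have "2^i*x = (real m0 + frac (2^L*x)) / 2^(L-i) + of_int (2^i * q)"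
    unfolding pw by (simp add: field_simps)
  then show ?thesis unfolding tt_def q_def by simp
qed

lemma block0:
  assumes "\<lfloor>2^L*x\<rfloor> mod 2^L = int 0" "i < L"
  shows "tt i x < 1/2"
proof -
  have e: "tt i x = frac (frac (2^L*x) / 2^(L-i))"
    using tt_block[OF assms(1), of i] assms(2) by (simp only: frac_add_of_int_right) simp
  have "(2::real)^1 \<le> 2^(L-i)" using assms(2) by (intro power_increasing) auto
  then have p2: "(2::real) \<le> 2^(L-i)" by simp
  have f: "0 \<le> frac (2^L*x)" "frac (2^L*x) < 1" by (simp_all add: frac_lt_1)
  have "frac (2^L*x) * 2 < 2^(L-i)" using f p2 by linarith
  then have "frac (2^L*x) / 2^(L-i) < 1/2"
    by (simp add: divide_less_eq)
  moreover have ge: "0 \<le> frac (2^L*x) / 2^(L-i)" using f by simp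
  ultimately have lt1: "frac (2^L*x) / 2^(L-i) < 1" by linarith
  have "frac (frac (2^L*x) / 2^(L-i)) = frac (2^L*x) / 2^(L-i)"
    by (rule frac_eq[THEN iffD2, OF conjI[OF ge lt1]])
  then show ?thesis unfolding e using \<open>frac (2^L*x) / 2^(L-i) < 1/2\<close> by simp
qed

lemma block1:
  assumes "\<lfloor>2^L*x\<rfloor> mod 2^L = int (2^L - 1)" "i < L"
  shows "tt i x \<ge> 1/2"
proof -
  define f where "f = frac (2^L*x)"
  have f: "0 \<le> f" "f < 1" by (simp_all add: f_def frac_lt_1)
  have pw: "(2::real)^L = 2^i * 2^(L-i)" using assms(2) by (simp add: power_add[symmetric])
  have "real (2^L - 1::nat) = 2^L - 1" by (simp add: of_nat_diff)
  then have "(real (2^L - 1::nat) + f) / 2^(L-i) = 1 - (1 - f)/2^(L-i) + of_int (2^i - 1)"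
    unfolding pw by (simp add: field_simps)
  then have e: "tt i x = frac (1 - (1 - f)/2^(L-i))"
    using tt_block[OF assms(1), of i] assms(2) unfolding f_def[symmetric]
    by (simp only: add.assoc of_int_add[symmetric] frac_add_of_int_right)
  have "(2::real)^1 \<le> 2^(L-i)" using assms(2) by (intro power_increasing) auto
  then have p2: "(2::real) \<le> 2^(L-i)" by simp
  have "(1 - f)/2^(L-i) \<le> 1/2" using f p2 by (simp add: divide_le_eq)
  moreover have "0 < (1 - f)/2^(L-i)" using f by simp
  ultimately have ge: "0 \<le> 1 - (1 - f)/2^(L-i)" and lt1: "1 - (1 - f)/2^(L-i) < 1" by linarith+
  have "frac (1 - (1 - f)/2^(L-i)) = 1 - (1 - f)/2^(L-i)"
    by (rule frac_eq[THEN iffD2, OF conjI[OF ge lt1]])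
  then show ?thesis unfolding e using \<open>(1 - f)/2^(L-i) \<le> 1/2\<close> by simp
qed

lemma tt_meas[measurable]: "tt k \<in> borel_measurable borel"
  unfolding tt_def[abs_def] frac_def by measurable

lemma Bad0_null: "Bad (\<lambda>u. u < 1/2) L \<in> null_sets lebesgue"
proof (rule nullG[of _ L 0])
  show "Bad (\<lambda>u. u < 1/2) L \<in> sets borel" unfolding Bad_def by measurable
  show "frac (2^L*x) \<in> Bad (\<lambda>u. u < 1/2) L" if "x \<in> Bad (\<lambda>u. u < 1/2) L" for x
    using Bad_frac[OF that] .
  show "\<lfloor>2^L*x\<rfloor> mod 2^L \<noteq> int 0" if "x \<in> Bad (\<lambda>u. u < 1/2) L" for x
  proof
    assume "\<lfloor>2^L*x\<rfloor> mod 2^L = int 0"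
    then have "\<forall>i<L. tt (0+i) x < 1/2" using block0 by simp
    then show False using that unfolding Bad_def by blast
  qed
qed simp

lemma Bad1_null: "Bad (\<lambda>u. u \<ge> 1/2) L \<in> null_sets lebesgue"
proof (rule nullG[of _ L "2^L - 1"])
  show "Bad (\<lambda>u. u \<ge> 1/2) L \<in> sets borel" unfolding Bad_def by measurable
  show "frac (2^L*x) \<in> Bad (\<lambda>u. u \<ge> 1/2) L" if "x \<in> Bad (\<lambda>u. u \<ge> 1/2) L" for x
    using Bad_frac[OF that] .
  show "\<lfloor>2^L*x\<rfloor> mod 2^L \<noteq> int (2^L - 1)" if "x \<in> Bad (\<lambda>u. u \<ge> 1/2) L" for x
  proof
    assume "\<lfloor>2^L*x\<rfloor> mod 2^L = int (2^L - 1)"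
    then have "\<forall>i<L. tt (0+i) x \<ge> 1/2" using block1 by simp
    then show False using that unfolding Bad_def by blast
  qed
qed simp

lemma shift_run:
  assumes "x \<notin> Bad P (L+N)"
  shows "\<exists>k\<ge>N. \<forall>i<L. P (tt (k+i) x)"
proof -
  from assms obtain k where k: "\<forall>i<L+N. P (tt (k+i) x)" unfolding Bad_def by auto
  show ?thesis
  proof (cases "k \<ge> N")
    case True then show ?thesis using k by (intro exI[of _ k]) auto
  next
    case False
    show ?thesis
    proof (intro exI[of _ N] conjI allI impI)
      fix i assume "i < L"
      then have "N - k + i < L + N" using False by simp
      then have "P (tt (k + (N - k + i)) x)" using k by blast
      moreover have "k + (N - k + i) = N + i" using False by simp
      ultimately show "P (tt (N+i) x)" by simp
    qed simp
  qed
qed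

theorem corollary2p11:
  shows "AE x in lborel. frechet_superdiff takagi x = {} \<and> frechet_subdiff takagi x = {}"
proof -
  define NN where "NN = (\<Union>L. Bad (\<lambda>u. u < 1/2) L \<union> Bad (\<lambda>u. u \<ge> 1/2) L)"
  have "NN \<in> null_sets lebesgue" unfolding NN_def using Bad0_null Bad1_null by blast
  moreover have "{x \<in> space lebesgue. \<not> goodx x} \<subseteq> NN"
  proof
    fix x assume "x \<in> {x \<in> space lebesgue. \<not> goodx x}"
    then have ng: "\<not> goodx x" by simp
    show "x \<in> NN"
    proof (rule ccontr)
      assume "x \<notin> NN"
      then have "\<And>L. x \<notin> Bad (\<lambda>u. u < 1/2) L" "\<And>L. x \<notin> Bad (\<lambda>u. u \<ge> 1/2) L"
        unfolding NN_def by blast+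
      then have "goodx x" unfolding goodx_def using shift_run by blast
      then show False using ng by simp
    qed
  qed
  ultimately have "AE x in lebesgue. goodx x" by (rule AE_I')
  then have "AE x in lborel. goodx x" by (simp add: AE_completion_iff)
  then show ?thesis by eventually_elim (simp add: super_empty sub_empty)
qed

end
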